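(* Let $P\in\mathbb{R}^{n\times n}$ be a row-stochastic matrix that is diagonalizable over $\mathbb{R}$, with real eigenvectors $w_1,\dots,w_n$ forming a basis of $\mathbb{R}^n$, let $r\in\mathbb{R}^n$, $\gamma\in[0,1)$, $V=(I-\gamma P)^{-1}r$, and $1\le k\le n$. Suppose there are indices $i_1,\dots,i_m$ with $m\le k$ such that $r\in\mathrm{span}\{w_{i_1},\dots,w_{i_m}\}$. Then there exists $\Phi^*\in\mathbb{R}^{n\times k}$ with orthonormal columns such that: (i) $\mathrm{span}(r)\subseteq\mathrm{span}(\Phi^* )$; (ii) $\Phi^*$ is a zero of the two-timescale TD vector field $G_{\mathrm{td}}$; (iii) $\Phi^*$ is a zero of the two-timescale latent self-prediction vector field $G_{\mathrm{lat}}$, hence a zero of $G_{\mathrm{td}}+G_{\mathrm{lat}}$ (a stationary point of the joint loss $L_{\mathrm{lat}}+L_{\mathrm{td}}$); and (iv) $\Phi^*\hat V^*(\Phi^* )=V$, i.e. the value function approximation error at $\Phi^*$ is zero.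
   Context: For $\Phi\in\mathbb{R}^{n\times k}$ of full column rank: $F^*(\Phi)=(\Phi^\top\Phi)^{-1}\Phi^\top P\Phi$ and $G_{\mathrm{lat}}(\Phi)=-(\Phi F^*(\Phi)-P\Phi)F^*(\Phi)^\top$ (two-timescale gradient flow of $L_{\mathrm{lat}}(\Phi,F)=\|\Phi F-[P\Phi]_{\mathrm{sg}}\|_F^2$). For $\Phi$ with $\Phi^\top(I-\gamma P)\Phi$ invertible: $\hat V^*(\Phi)=(\Phi^\top(I-\gamma P)\Phi)^{-1}\Phi^\top r$ and $G_{\mathrm{td}}(\Phi)=-(\Phi\hat V^*(\Phi)-r-\gamma P\Phi\hat V^*(\Phi))\hat V^*(\Phi)^\top$ (two-timescale semi-gradient flow of $L_{\mathrm{td}}(\Phi,\hat V)=\|\Phi\hat V-[r+\gamma P\Phi\hat V]_{\mathrm{sg}}\|_2^2$). $[\cdot]_{\mathrm{sg}}$ denotes stop-gradient. $P$, $r$, $V$ are the transition matrix, reward vector and value function of a finite MDP under a fixed policy. *)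

theory Defs
  imports "HOL-Analysis.Analysis"
begin

text \<open>Matrices are HOL-Analysis Cartesian matrices: an n x k matrix is real^'k^'n.\<close>

definition row_stochastic :: "real^'n^'n \<Rightarrow> bool" where
  "row_stochastic P \<longleftrightarrow> (\<forall>i j. 0 \<le> P $ i $ j) \<and> (\<forall>i. (\<Sum>j\<in>UNIV. P $ i $ j) = 1)"

definition outer :: "real^'n \<Rightarrow> real^'k \<Rightarrow> real^'k^'n" where
  "outer u v = (\<chi> i j. u $ i * v $ j)"

definition Fstar :: "real^'n^'n \<Rightarrow> real^'k^'n \<Rightarrow> real^'k^'k" where
  "Fstar P \<Phi> = matrix_inv (transpose \<Phi> ** \<Phi>) ** transpose \<Phi> ** P ** \<Phi>"

definition G_lat :: "real^'n^'n \<Rightarrow> real^'k^'n \<Rightarrow> real^'k^'n" where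
  "G_lat P \<Phi> = - ((\<Phi> ** Fstar P \<Phi> - P ** \<Phi>) ** transpose (Fstar P \<Phi>))"

definition Vhat :: "real^'n^'n \<Rightarrow> real \<Rightarrow> real^'n \<Rightarrow> real^'k^'n \<Rightarrow> real^'k" where
  "Vhat P \<gamma> r \<Phi> = matrix_inv (transpose \<Phi> ** (mat 1 - \<gamma> *\<^sub>R P) ** \<Phi>) *v (transpose \<Phi> *v r)"

definition G_td :: "real^'n^'n \<Rightarrow> real \<Rightarrow> real^'n \<Rightarrow> real^'k^'n \<Rightarrow> real^'k^'n" where
  "G_td P \<gamma> r \<Phi> = - outer (\<Phi> *v Vhat P \<gamma> r \<Phi> - r - \<gamma> *\<^sub>R (P *v (\<Phi> *v Vhat P \<gamma> r \<Phi>)))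
                             (Vhat P \<gamma> r \<Phi>)"

definition value_fun :: "real^'n^'n \<Rightarrow> real \<Rightarrow> real^'n \<Rightarrow> real^'n" where
  "value_fun P \<gamma> r = matrix_inv (mat 1 - \<gamma> *\<^sub>R P) *v r"

end

theory Submission
  imports Defs
begin

lemma minv_props:
  fixes A :: "real^'n^'n"
  assumes "invertible A"
  shows "A ** matrix_inv A = mat 1 \<and> matrix_inv A ** A = mat 1"
  using assms unfolding invertible_def matrix_inv_def by (rule someI_ex)

lemma minv_one: "matrix_inv (mat 1 :: real^'n^'n) = mat 1"
proof -
  have "invertible (mat 1 :: real^'n^'n)" unfolding invertible_def
    by (metis matrix_mul_lid)
  from minv_props[OF this] show ?thesis by (metis matrix_mul_lid)
qed

lemma IgP_apply:
  fixes P :: "real^'n^'n"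
  shows "(mat 1 - c *\<^sub>R P) *v x = x - c *\<^sub>R (P *v x)"
  by (simp add: matrix_vector_mult_diff_rdistrib scaleR_matrix_vector_assoc)

lemma IgP_ker:
  fixes P :: "real^'n^'n"
  assumes stoch: "row_stochastic P" and g: "0 \<le> \<gamma>" "\<gamma> < 1"
    and x: "(mat 1 - \<gamma> *\<^sub>R P) *v x = 0"
  shows "x = 0"
proof -
  have xe: "x = \<gamma> *\<^sub>R (P *v x)" using x by (simp add: IgP_apply)
  define M where "M = Max (range (\<lambda>i. \<bar>x $ i\<bar>))"
  have Mge: "\<bar>x $ j\<bar> \<le> M" for j unfolding M_def by (rule Max_ge) auto
  have "M \<in> range (\<lambda>i. \<bar>x $ i\<bar>)" unfolding M_def by (rule Max_in) auto
  then obtain i where i: "\<bar>x $ i\<bar> = M" by auto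
  have "\<bar>x $ i\<bar> = \<gamma> * \<bar>\<Sum>j\<in>UNIV. P $ i $ j * x $ j\<bar>"
    using g by (subst xe) (simp add: matrix_vector_mult_def abs_mult)
  also have "\<bar>\<Sum>j\<in>UNIV. P $ i $ j * x $ j\<bar> \<le> (\<Sum>j\<in>UNIV. P $ i $ j * M)"
  proof -
    have "\<bar>\<Sum>j\<in>UNIV. P $ i $ j * x $ j\<bar> \<le> (\<Sum>j\<in>UNIV. \<bar>P $ i $ j * x $ j\<bar>)"
      by (rule sum_abs)
    also have "\<dots> \<le> (\<Sum>j\<in>UNIV. P $ i $ j * M)"
      apply (rule sum_mono)
      using stoch Mge unfolding row_stochastic_def
      by (simp add: abs_mult mult_left_mono)
    finally show ?thesis .
  qed
  also have "(\<Sum>j\<in>UNIV. P $ i $ j * M) = M"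
    using stoch unfolding row_stochastic_def by (simp add: sum_distrib_right[symmetric])
  finally have "M \<le> \<gamma> * M" using g i by (simp add: mult_left_mono)
  moreover have "0 \<le> M" using i by auto
  ultimately have "M = 0" using g
    by (metis antisym mult_le_cancel_right1 not_le)
  then show ?thesis using Mge by (simp add: vec_eq_iff)
qed

lemma IgP_inv:
  fixes P :: "real^'n^'n"
  assumes stoch: "row_stochastic P" and g: "0 \<le> \<gamma>" "\<gamma> < 1"
  shows "invertible (mat 1 - \<gamma> *\<^sub>R P)"
  unfolding invertible_left_inverse matrix_left_invertible_ker
  using IgP_ker[OF assms] by blast

theorem proposition5:
  fixes P :: "real^'n^'n" and r :: "real^'n" and \<gamma> :: real
    and w :: "'n \<Rightarrow> real^'n" and S :: "'n set"
  assumes stoch: "row_stochastic P"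
    and eig: "\<forall>i. \<exists>c::real. P *v w i = c *\<^sub>R w i"
    and basis: "inj w" "independent (range w)" "span (range w) = UNIV"
    and gamma: "0 \<le> \<gamma>" "\<gamma> < 1"
    and k: "CARD('k) \<le> CARD('n)"
    and m: "card S \<le> CARD('k)"
    and r_span: "r \<in> span (w ` S)"
  shows "\<exists>\<Phi> :: real^'k^'n.
           transpose \<Phi> ** \<Phi> = mat 1 \<and>
           span {r} \<subseteq> span (columns \<Phi>) \<and>
           invertible (transpose \<Phi> ** (mat 1 - \<gamma> *\<^sub>R P) ** \<Phi>) \<and>
           G_td P \<gamma> r \<Phi> = 0 \<and>
           G_lat P \<Phi> = 0 \<and>
           G_td P \<gamma> r \<Phi> + G_lat P \<Phi> = 0 \<and>
           \<Phi> *v Vhat P \<gamma> r \<Phi> = value_fun P \<gamma> r"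
proof -
  have "CARD('k) - card S \<le> card (UNIV - S)"
    using k m by (simp add: card_Diff_subset)
  then obtain U where U: "U \<subseteq> UNIV - S" "card U = CARD('k) - card S"
    using obtain_subset_with_card_n[of "CARD('k) - card S" "UNIV - S"] by blast
  define T where "T = S \<union> U"
  have cardT: "card T = CARD('k)" unfolding T_def using U m
    by (subst card_Un_disjoint) auto
  have ST: "S \<subseteq> T" unfolding T_def by auto
  define W where "W = span (w ` T)"
  have subW: "subspace W" unfolding W_def by simp
  have indT: "independent (w ` T)"
    by (rule independent_mono[OF basis(2)]) auto
  have dimW: "dim W = CARD('k)"
  proof -
    have "inj_on w T" using basis(1) by (rule inj_on_subset) simp
    then have "card (w ` T) = card T" by (rule card_image)
    then show ?thesis using dim_span_eq_card_independent[OF indT] cardT by (simp add: W_def)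
  qed
  have rW: "r \<in> W" unfolding W_def using r_span ST
    by (meson image_mono span_mono subsetD)
  have invW: "P *v x \<in> W" if "x \<in> W" for x
  proof -
    have "(*v) P ` W = span ((*v) P ` w ` T)" unfolding W_def
      by (simp add: span_linear_image matrix_vector_mul_linear)
    also have "\<dots> \<subseteq> W"
    proof (rule span_minimal[OF _ subW])
      show "(*v) P ` w ` T \<subseteq> W"
      proof
        fix y assume "y \<in> (*v) P ` w ` T"
        then obtain i where "i \<in> T" "y = P *v w i" by auto
        moreover obtain c where "P *v w i = c *\<^sub>R w i" using eig by blast
        ultimately show "y \<in> W" unfolding W_def
          by (simp add: span_base span_mul)
      qed
    qed
    finally show ?thesis using that by auto
  qed
  obtain B where B: "B \<subseteq> W" "pairwise orthogonal B" "\<And>x. x \<in> B \<Longrightarrow> norm x = 1"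
    "independent B" "card B = dim W" "span B = W"
    using orthonormal_basis_subspace[OF subW] by metis
  have finB: "finite B" using B(4) independent_imp_finite by blast
  obtain f where f: "bij_betw f (UNIV :: 'k set) B"
    using bij_betw_iff_card[of "UNIV :: 'k set" B] finB B(5) dimW by auto
  define \<Phi> :: "real^'k^'n" where "\<Phi> = (\<chi> i j. f j $ i)"
  have colj: "column j \<Phi> = f j" for j unfolding \<Phi>_def column_def by (simp add: vec_eq_iff)
  have cols: "columns \<Phi> = B" unfolding columns_def using colj f
    by (auto simp: bij_betw_def)
  have spanW: "span (columns \<Phi>) = W" using cols B(6) by simp
  have orth: "transpose \<Phi> ** \<Phi> = mat 1"
  proof -
    have "(transpose \<Phi> ** \<Phi>) $ a $ b = (mat 1 :: real^'k^'k) $ a $ b" for a b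
    proof -
      have "(transpose \<Phi> ** \<Phi>) $ a $ b = f a \<bullet> f b"
        unfolding \<Phi>_def by (simp add: matrix_matrix_mult_def transpose_def inner_vec_def)
      also have "\<dots> = (if a = b then 1 else 0)"
      proof (cases "a = b")
        case True
        have "f a \<in> B" using f by (auto simp: bij_betw_def)
        then have "norm (f a) = 1" using B(3) by blast
        then show ?thesis using True by (simp add: dot_square_norm)
      next
        case False
        have "f a \<in> B" "f b \<in> B" "f a \<noteq> f b" using f False
          by (auto simp: bij_betw_def inj_on_def)
        then have "orthogonal (f a) (f b)" using B(2) by (auto simp: pairwise_def)
        then show ?thesis using False by (simp add: orthogonal_def)
      qed
      finally show ?thesis by (simp add: mat_def)
    qed
    then show ?thesis by (simp add: vec_eq_iff)
  qed
  have proj: "\<Phi> *v (transpose \<Phi> *v z) = z" if "z \<in> W" for z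
  proof -
    have "z \<in> span (columns \<Phi>)" using that spanW by simp
    then show ?thesis
    proof (induction rule: span_induct)
      case base
      show ?case unfolding subspace_def
        by (simp add: matrix_vector_mul_assoc matrix_vector_right_distrib matrix_vector_mult_scaleR
            del: transpose_matrix_vector)
    next
      case (step x)
      then obtain j where "x = column j \<Phi>" unfolding columns_def by auto
      then have "x = \<Phi> *v axis j 1" by (simp add: matrix_vector_mult_basis)
      then show ?case by (simp add: matrix_vector_mul_assoc orth del: transpose_matrix_vector)
    qed
  qed
  have perp: "z = 0" if "z \<in> W" "transpose \<Phi> *v z = 0" for z
    using proj[OF that(1)] that(2) by simp
  have PhiW: "\<Phi> *v y \<in> W" for y
    using matrix_vector_mult_in_columnspace spanW by blast
  have IW: "(mat 1 - \<gamma> *\<^sub>R P) *v x \<in> W" if "x \<in> W" for x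
    unfolding IgP_apply using that invW subW
    by (simp add: subspace_diff subspace_mul)
  define M where "M = transpose \<Phi> ** (mat 1 - \<gamma> *\<^sub>R P) ** \<Phi>"
  have Mapp: "M *v y = transpose \<Phi> *v ((mat 1 - \<gamma> *\<^sub>R P) *v (\<Phi> *v y))" for y
    unfolding M_def by (simp add: matrix_vector_mul_assoc matrix_mul_assoc del: transpose_matrix_vector)
  have invM: "invertible M"
    unfolding invertible_left_inverse matrix_left_invertible_ker
  proof (intro allI impI)
    fix y assume "M *v y = 0"
    then have "(mat 1 - \<gamma> *\<^sub>R P) *v (\<Phi> *v y) = 0"
      using perp IW PhiW Mapp by metis
    then have "\<Phi> *v y = 0" using IgP_ker[OF stoch gamma] by blast
    then have "transpose \<Phi> *v (\<Phi> *v y) = 0" by simp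
    then show "y = 0" by (simp add: matrix_vector_mul_assoc orth del: transpose_matrix_vector)
  qed
  define v where "v = Vhat P \<gamma> r \<Phi>"
  have "M *v v = transpose \<Phi> *v r"
    unfolding v_def Vhat_def M_def[symmetric]
    using minv_props[OF invM] by (simp add: matrix_vector_mul_assoc)
  then have "transpose \<Phi> *v ((mat 1 - \<gamma> *\<^sub>R P) *v (\<Phi> *v v) - r) = 0"
    by (simp add: Mapp matrix_vector_mult_diff_distrib)
  moreover have "(mat 1 - \<gamma> *\<^sub>R P) *v (\<Phi> *v v) - r \<in> W"
    using IW PhiW rW subW by (simp add: subspace_diff)
  ultimately have "(mat 1 - \<gamma> *\<^sub>R P) *v (\<Phi> *v v) - r = 0"
    using perp by blast
  then have resid: "(mat 1 - \<gamma> *\<^sub>R P) *v (\<Phi> *v v) = r" by simp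
  have Gtd: "G_td P \<gamma> r \<Phi> = 0"
  proof -
    have e1: "\<Phi> *v v - \<gamma> *\<^sub>R (P *v (\<Phi> *v v)) = r" using resid by (simp only: IgP_apply)
    have e: "\<Phi> *v v - r - \<gamma> *\<^sub>R (P *v (\<Phi> *v v)) = 0"
      by (simp add: e1[symmetric])
    show ?thesis unfolding G_td_def v_def[symmetric] e outer_def
      by (simp add: vec_eq_iff)
  qed
  have Fs: "Fstar P \<Phi> = transpose \<Phi> ** P ** \<Phi>"
    unfolding Fstar_def orth minv_one by simp
  have "\<Phi> ** Fstar P \<Phi> = P ** \<Phi>"
    unfolding Fs matrix_eq
  proof
    fix x
    have "P *v (\<Phi> *v x) \<in> W" using invW PhiW by blast
    then show "(\<Phi> ** (transpose \<Phi> ** P ** \<Phi>)) *v x = (P ** \<Phi>) *v x"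
      using proj by (simp add: matrix_vector_mul_assoc[symmetric])
  qed
  then have Glat: "G_lat P \<Phi> = 0" unfolding G_lat_def by simp
  have val: "\<Phi> *v v = value_fun P \<gamma> r"
    unfolding value_fun_def resid[symmetric]
    using minv_props[OF IgP_inv[OF stoch gamma]]
    by (metis matrix_vector_mul_assoc matrix_vector_mul_lid)
  have "span {r} \<subseteq> span (columns \<Phi>)" using rW spanW
    using span_minimal[OF _ subW, of "{r}"] by simp
  then show ?thesis using orth invM Gtd Glat val
    unfolding M_def v_def by auto
qed

end
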